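(* Assume $\epsilon\in[0,1/2)$ and the inlier stability condition. Then for every center $\hat\mu\in\mathbb R^p$ and every $w\in\Delta_{N,\epsilon}$, $$\Big\|\sum_{n=1}^Nw_ng_n-\mu_g\Big\|_2\le\delta_\mu+\alpha_\epsilon\sqrt{\gamma(w;\hat\mu)},\qquad \alpha_\epsilon=\sqrt{\frac{\epsilon}{1-2\epsilon}}.$$ In particular $\alpha_\epsilon<1$ whenever $\epsilon<1/3$.
   Context: Fix $N\ge1$, $p\ge1$, $\epsilon\in[0,1)$ and vectors $g_1,\dots,g_N\in\mathbb R^p$. For an index set $I$ and $\epsilon'\in[0,1)$, $\Delta_{I,\epsilon'}=\{w\in\mathbb R^{I}:\sum_{n\in I}w_n=1,\ 0\le w_n\le\frac1{(1-\epsilon')|I|}\}$, and $\Delta_{N,\epsilon}=\Delta_{[N],\epsilon}$. For $\hat\mu\in\mathbb R^p$, $S(w;\hat\mu)=\sum_n w_n(g_n-\hat\mu)(g_n-\hat\mu)^\top$ and $\gamma(w;\hat\mu)=\|S(w;\hat\mu)\|_{op}$ (largest eigenvalue). Inlier stability condition: there is a partition $[N]=I_{in}\sqcup I_{out}$ with $|I_{out}|\le\epsilon N$, a vector $\mu_g\in\mathbb R^p$, a symmetric PSD matrix $\Sigma_g$ and constants $\delta_\mu,\delta_\Sigma\ge0$ such that for every $w\in\Delta_{I_{in},\epsilon/(1-\epsilon)}$: $\|\sum_{n\in I_{in}}w_n(g_n-\mu_g)\|_2\le\delta_\mu$ and $\sum_{n\in I_{in}}w_n(g_n-\mu_g)(g_n-\mu_g)^\top\preceq\Sigma_g+\delta_\Sigma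 I_p$. *)

theory Defs
  imports "HOL-Analysis.Analysis"
begin

definition outer :: "real^'p \<Rightarrow> real^'p \<Rightarrow> real^'p^'p" where
  "outer x y = (\<chi> i j. x $ i * y $ j)"

definition capped_simplex :: "nat set \<Rightarrow> real \<Rightarrow> (nat \<Rightarrow> real) \<Rightarrow> bool" where
  "capped_simplex I e w \<longleftrightarrow> (\<Sum>n\<in>I. w n) = 1 \<and>
     (\<forall>n\<in>I. 0 \<le> w n \<and> w n \<le> 1 / ((1 - e) * real (card I)))"

definition Smat :: "nat \<Rightarrow> (nat \<Rightarrow> real^'p) \<Rightarrow> (nat \<Rightarrow> real) \<Rightarrow> real^'p \<Rightarrow> real^'p^'p" where
  "Smat N g w mu = (\<Sum>n\<in>{1..N}. w n *\<^sub>R outer (g n - mu) (g n - mu))"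

definition gamma :: "nat \<Rightarrow> (nat \<Rightarrow> real^'p) \<Rightarrow> (nat \<Rightarrow> real) \<Rightarrow> real^'p \<Rightarrow> real" where
  "gamma N g w mu = onorm (\<lambda>x. Smat N g w mu *v x)"

definition loewner_le :: "real^'p^'p \<Rightarrow> real^'p^'p \<Rightarrow> bool" where
  "loewner_le A B \<longleftrightarrow> (\<forall>v. v \<bullet> (A *v v) \<le> v \<bullet> (B *v v))"

definition psd_sym :: "real^'p^'p \<Rightarrow> bool" where
  "psd_sym A \<longleftrightarrow> transpose A = A \<and> (\<forall>v. 0 \<le> v \<bullet> (A *v v))"

definition inlier_stable ::
  "nat \<Rightarrow> real \<Rightarrow> (nat \<Rightarrow> real^'p) \<Rightarrow> real^'p \<Rightarrow> real^'p^'p \<Rightarrow> real \<Rightarrow> real \<Rightarrow> bool" where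
  "inlier_stable N eps g mu_g Sigma_g d_mu d_Sigma \<longleftrightarrow>
     (\<exists>I_in I_out. I_in \<union> I_out = {1..N} \<and> I_in \<inter> I_out = {} \<and>
        real (card I_out) \<le> eps * real N \<and>
        (\<forall>w. capped_simplex I_in (eps / (1 - eps)) w \<longrightarrow>
           norm (\<Sum>n\<in>I_in. w n *\<^sub>R (g n - mu_g)) \<le> d_mu \<and>
           loewner_le (\<Sum>n\<in>I_in. w n *\<^sub>R outer (g n - mu_g) (g n - mu_g))
                      (Sigma_g + d_Sigma *\<^sub>R mat 1)))"

end

theory Submission
  imports Defs
begin

lemma wcs:
  fixes w z :: "nat \<Rightarrow> real"
  assumes "finite S" "\<forall>n\<in>S. 0 \<le> w n"
  shows "(\<Sum>n\<in>S. w n * z n)^2 \<le> (\<Sum>n\<in>S. w n) * (\<Sum>n\<in>S. w n * (z n)^2)"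
proof (cases "(\<Sum>n\<in>S. w n) = 0")
  case True
  then have "\<forall>n\<in>S. w n = 0" using assms sum_nonneg_eq_0_iff by blast
  then show ?thesis by simp
next
  case False
  define W where "W = (\<Sum>n\<in>S. w n)"
  define m where "m = (\<Sum>n\<in>S. w n * z n) / W"
  have Wp: "W > 0" using False assms sum_nonneg unfolding W_def
    by (metis order_le_less)
  have "0 \<le> (\<Sum>n\<in>S. w n * (z n - m)^2)"
    using assms by (intro sum_nonneg) auto
  also have "\<dots> = (\<Sum>n\<in>S. w n * (z n)^2) - 2 * m * (\<Sum>n\<in>S. w n * z n) + m^2 * W"
    unfolding W_def
    by (simp add: power2_eq_square algebra_simps sum.distrib sum_subtractf sum_distrib_left sum_distrib_right)
  also have "\<dots> = (\<Sum>n\<in>S. w n * (z n)^2) - (\<Sum>n\<in>S. w n * z n)^2 / W"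
    using Wp unfolding m_def by (simp add: field_simps power2_eq_square)
  finally have "(\<Sum>n\<in>S. w n * z n)^2 / W \<le> (\<Sum>n\<in>S. w n * (z n)^2)" by simp
  then show ?thesis using Wp unfolding W_def[symmetric] by (simp add: field_simps)
qed

lemma sum_mv: "finite S \<Longrightarrow> (\<Sum>n\<in>S. A n) *v (u::real^'p) = (\<Sum>n\<in>S. A n *v u)"
  by (induction S rule: finite_induct) (auto simp: matrix_vector_mult_add_rdistrib)

lemma outer_mv: "outer v v *v u = (v \<bullet> u) *\<^sub>R (v::real^'p)"
  by (simp add: vec_eq_iff matrix_vector_mult_def outer_def inner_vec_def sum_distrib_left algebra_simps)

lemma quad:
  fixes u mu :: "real^'p"
  shows "u \<bullet> (Smat N g w mu *v u) = (\<Sum>n\<in>{1..N}. w n * (u \<bullet> (g n - mu))^2)"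
  unfolding Smat_def
  by (simp add: sum_mv outer_mv inner_sum_right power2_eq_square inner_commute algebra_simps
       flip: scaleR_matrix_vector_assoc)

theorem mainTheorem9:
  fixes N :: nat and eps :: real and g :: "nat \<Rightarrow> real^'p"
    and mu_g :: "real^'p" and Sigma_g :: "real^'p^'p" and d_mu d_Sigma :: real
  assumes "N \<ge> 1" and "0 \<le> eps" and "eps < 1/2"
    and "psd_sym Sigma_g" and "d_mu \<ge> 0" and "d_Sigma \<ge> 0"
    and "inlier_stable N eps g mu_g Sigma_g d_mu d_Sigma"
  shows "(\<forall>mu_hat w. capped_simplex {1..N} eps w \<longrightarrow>
            norm ((\<Sum>n\<in>{1..N}. w n *\<^sub>R g n) - mu_g)
              \<le> d_mu + sqrt (eps / (1 - 2 * eps)) * sqrt (gamma N g w mu_hat))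
         \<and> (eps < 1/3 \<longrightarrow> sqrt (eps / (1 - 2 * eps)) < 1)"
proof (intro conjI allI impI)
  assume "eps < 1/3"
  then show "sqrt (eps / (1 - 2 * eps)) < 1" using assms(3) by (simp add: field_simps)
next
  fix mu_hat and w :: "nat \<Rightarrow> real"
  assume cs: "capped_simplex {1..N} eps w"
  obtain I_in I_out where part: "I_in \<union> I_out = {1..N}" "I_in \<inter> I_out = {}"
    and cardo: "real (card I_out) \<le> eps * real N"
    and stab: "\<And>w. capped_simplex I_in (eps / (1 - eps)) w \<Longrightarrow>
           norm (\<Sum>n\<in>I_in. w n *\<^sub>R (g n - mu_g)) \<le> d_mu"
    using assms(7) unfolding inlier_stable_def by blast
  have fin: "finite I_in" "finite I_out" using part(1) finite_subset
    by (metis finite_Un finite_atLeastAtMost)+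
  have cardsum: "card I_in + card I_out = N"
    using card_Un_disjoint[OF fin part(2)] part(1) by simp
  define Nr where "Nr = real N"
  define k where "k = real (card I_in)"
  define ko where "ko = real (card I_out)"
  have kon: "k + ko = Nr" unfolding k_def ko_def Nr_def using cardsum by (metis of_nat_add)
  have Nrp: "Nr \<ge> 1" unfolding Nr_def using assms(1) by simp
  have oe: "ko \<le> eps * Nr" using cardo unfolding ko_def Nr_def .
  define D where "D = (1 - eps) * Nr"
  have Dp: "D > 0" unfolding D_def using Nrp assms(3) by simp
  have w1: "(\<Sum>n\<in>{1..N}. w n) = 1" using cs unfolding capped_simplex_def by blast
  have wnn: "\<And>n. n \<in> {1..N} \<Longrightarrow> 0 \<le> w n" using cs unfolding capped_simplex_def by blast
  have wub: "\<And>n. n \<in> {1..N} \<Longrightarrow> w n \<le> 1 / D"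
    using cs unfolding capped_simplex_def D_def Nr_def by simp
  have wubD: "\<And>n. n \<in> {1..N} \<Longrightarrow> w n * D \<le> 1"
    using wub Dp by (simp add: field_simps)
  have inN: "\<And>n. n \<in> I_in \<Longrightarrow> n \<in> {1..N}" "\<And>n. n \<in> I_out \<Longrightarrow> n \<in> {1..N}"
    using part(1) by blast+
  have wnn2: "\<forall>n\<in>I_in. 0 \<le> w n" "\<forall>n\<in>I_out. 0 \<le> w n" using inN wnn by blast+
  define A where "A = (\<Sum>n\<in>I_in. w n)"
  define B where "B = (\<Sum>n\<in>I_out. w n)"
  have split: "\<And>f :: nat \<Rightarrow> 'z::comm_monoid_add. (\<Sum>n\<in>{1..N}. f n) = (\<Sum>n\<in>I_in. f n) + (\<Sum>n\<in>I_out. f n)"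
    using sum.union_disjoint[OF fin part(2)] part(1) by metis
  have AB: "A + B = 1" using w1 split[of w] unfolding A_def B_def by simp
  have Bnn: "B \<ge> 0" unfolding B_def using wnn2 by (intro sum_nonneg) auto
  have BD: "B * D \<le> ko"
  proof -
    have "B \<le> ko * (1 / D)" unfolding B_def ko_def
      using wub inN by (intro sum_bounded_above) auto
    then show ?thesis using Dp by (simp add: field_simps)
  qed
  have AD: "A * D \<ge> k - eps * Nr"
  proof -
    have "A * D + B * D = D" using AB by (metis distrib_right mult_1)
    moreover have "D = Nr - eps * Nr" unfolding D_def by (simp add: algebra_simps)
    ultimately show ?thesis using BD kon by linarith
  qed
  have Ap: "A > 0"
  proof -
    have "k - eps * Nr \<ge> Nr - 2 * eps * Nr" using kon oe by linarith
    moreover have "Nr - 2 * eps * Nr = Nr * (1 - 2 * eps)" by (simp add: algebra_simps)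
    moreover have "Nr * (1 - 2 * eps) > 0" using Nrp assms(3) by simp
    ultimately have "A * D > 0" using AD by linarith
    then show ?thesis using Dp by (simp add: zero_less_mult_iff)
  qed
  have kp: "k > 0"
  proof -
    have "k \<ge> Nr - eps * Nr" using kon oe by linarith
    moreover have "Nr - eps * Nr = Nr * (1 - eps)" by (simp add: algebra_simps)
    moreover have "Nr * (1 - eps) > 0" using Nrp assms(3) by simp
    ultimately show ?thesis by linarith
  qed
  have BA: "B * (1 - 2 * eps) \<le> eps * A"
  proof -
    have "(B * (1 - eps)) * Nr \<le> eps * Nr" using BD oe unfolding D_def by (simp add: mult.assoc)
    then have b1: "B * (1 - eps) \<le> eps" using Nrp by simp
    have "eps * A + eps * B = eps" using AB by (metis distrib_left mult_1_right)
    moreover have "B * (1 - 2 * eps) = B * (1 - eps) - eps * B" by (simp add: algebra_simps)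
    ultimately show ?thesis using b1 by linarith
  qed
  define w' where "w' = (\<lambda>n. w n / A)"
  have csin: "capped_simplex I_in (eps / (1 - eps)) w'"
    unfolding capped_simplex_def
  proof (intro conjI ballI)
    show "(\<Sum>n\<in>I_in. w' n) = 1" unfolding w'_def using Ap
      by (simp add: A_def[symmetric] flip: sum_divide_distrib)
  next
    fix n assume n: "n \<in> I_in"
    then have nN: "n \<in> {1..N}" using part(1) by blast
    show "0 \<le> w' n" unfolding w'_def using wnn[OF nN] Ap by simp
    have e1: "1 - eps / (1 - eps) = (1 - 2 * eps) / (1 - eps)" using assms(3)
      by (simp add: field_simps)
    have key: "(1 - 2 * eps) * k \<le> (1 - eps) * (k - eps * Nr)"
    proof -
      have "(1 - eps) * (k - eps * Nr) - (1 - 2 * eps) * k = eps * (eps * Nr - ko)"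
        using kon[symmetric] by (simp add: algebra_simps)
      moreover have "eps * (eps * Nr - ko) \<ge> 0" using assms(2) oe by simp
      ultimately show ?thesis by linarith
    qed
    have e2: "w n * ((1 - 2 * eps) * k) * D \<le> (1 - 2 * eps) * k"
    proof -
      have "(w n * D) * ((1 - 2 * eps) * k) \<le> 1 * ((1 - 2 * eps) * k)"
        using wubD[OF nN] assms(3) kp by (intro mult_right_mono) auto
      then show ?thesis by (simp add: algebra_simps)
    qed
    have "(1 - 2 * eps) * k \<le> (1 - eps) * (A * D)"
    proof -
      have "(1 - eps) * (k - eps * Nr) \<le> (1 - eps) * (A * D)"
        using AD assms(3) by (intro mult_left_mono) auto
      then show ?thesis using key by linarith
    qed
    with e2 have "w n * ((1 - 2 * eps) * k) * D \<le> ((1 - eps) * A) * D" by (simp add: algebra_simps)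
    then have e3: "w n * ((1 - 2 * eps) * k) \<le> (1 - eps) * A" using Dp by simp
    have pos: "(1 - 2 * eps) * k > 0" "1 - eps > 0" using kp assms(3) by auto
    show "w' n \<le> 1 / ((1 - eps / (1 - eps)) * real (card I_in))"
      unfolding w'_def e1 k_def[symmetric] using e3 pos Ap
      by (simp add: field_simps)
  qed
  define v where "v = (\<Sum>n\<in>I_in. w' n *\<^sub>R (g n - mu_g))"
  have nv: "norm v \<le> d_mu" using stab[OF csin] unfolding v_def .
  define d where "d = (\<Sum>n\<in>{1..N}. w n *\<^sub>R (g n - mu_g))"
  have dd: "(\<Sum>n\<in>{1..N}. w n *\<^sub>R g n) - mu_g = d"
    unfolding d_def using w1
    by (simp add: scaleR_diff_right sum_subtractf flip: scaleR_sum_left)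
  have gnn: "gamma N g w mu_hat \<ge> 0" unfolding gamma_def
    by (rule onorm_pos_le[OF matrix_vector_mul_bounded_linear])
  have sqnn: "sqrt (eps / (1 - 2 * eps)) * sqrt (gamma N g w mu_hat) \<ge> 0"
    using gnn assms(2,3) by simp
  show "norm ((\<Sum>n\<in>{1..N}. w n *\<^sub>R g n) - mu_g)
              \<le> d_mu + sqrt (eps / (1 - 2 * eps)) * sqrt (gamma N g w mu_hat)"
  proof (cases "d = 0")
    case True
    then show ?thesis using dd sqnn assms(5) by simp
  next
    case False
    define u where "u = d /\<^sub>R norm d"
    have nu: "norm u = 1" unfolding u_def using False by simp
    define t where "t = norm d"
    define x where "x = (\<lambda>n. u \<bullet> (g n - mu_g))"
    have tx: "t = (\<Sum>n\<in>{1..N}. w n * x n)"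
    proof -
      have "u \<bullet> d = t" unfolding u_def t_def using False
        by (simp add: power2_norm_eq_inner[symmetric] power2_eq_square)
      then show ?thesis unfolding d_def x_def by (simp add: inner_sum_right)
    qed
    define b where "b = u \<bullet> v"
    have bb: "b \<le> d_mu"
      using Cauchy_Schwarz_ineq2[of u v] nu nv unfolding b_def by simp
    have inx: "(\<Sum>n\<in>I_in. w n * x n) = A * b"
      unfolding b_def v_def w'_def x_def using Ap
      by (simp add: inner_sum_right sum_distrib_left)
    have outx: "(\<Sum>n\<in>I_out. w n * x n) = t - A * b"
      using tx split[of "\<lambda>n. w n * x n"] inx by simp
    define c where "c = u \<bullet> (mu_hat - mu_g)"
    define z where "z = (\<lambda>n. x n - c)"
    have zz: "\<And>n. z n = u \<bullet> (g n - mu_hat)" unfolding z_def x_def c_def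
      by (simp add: inner_diff_right)
    define Q where "Q = (\<Sum>n\<in>{1..N}. w n * (z n)^2)"
    have Qg: "Q \<le> gamma N g w mu_hat"
    proof -
      have "Q = u \<bullet> (Smat N g w mu_hat *v u)" unfolding Q_def zz quad ..
      also have "\<dots> \<le> norm u * norm (Smat N g w mu_hat *v u)" by (rule norm_cauchy_schwarz)
      also have "\<dots> \<le> gamma N g w mu_hat * norm u" unfolding gamma_def
        using onorm[OF matrix_vector_mul_bounded_linear, of "Smat N g w mu_hat" u] nu by simp
      finally show ?thesis using nu by simp
    qed
    define P where "P = (\<Sum>n\<in>I_in. w n * (z n)^2)"
    define R where "R = (\<Sum>n\<in>I_out. w n * (z n)^2)"
    have QPR: "Q = P + R" unfolding Q_def P_def R_def by (rule split)
    have zin: "(\<Sum>n\<in>I_in. w n * z n) = A * b - A * c"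
    proof -
      have "(\<Sum>n\<in>I_in. w n * z n) = (\<Sum>n\<in>I_in. w n * x n) - (\<Sum>n\<in>I_in. w n) * c"
        unfolding z_def by (simp add: right_diff_distrib sum_subtractf sum_distrib_right)
      then show ?thesis using inx unfolding A_def by simp
    qed
    have zout: "(\<Sum>n\<in>I_out. w n * z n) = t - A * b - B * c"
    proof -
      have "(\<Sum>n\<in>I_out. w n * z n) = (\<Sum>n\<in>I_out. w n * x n) - (\<Sum>n\<in>I_out. w n) * c"
        unfolding z_def by (simp add: right_diff_distrib sum_subtractf sum_distrib_right)
      then show ?thesis using outx unfolding B_def by simp
    qed
    have cs1: "(A * b - A * c)^2 \<le> A * P"
      using wcs[OF fin(1), of w z] wnn2 unfolding zin P_def A_def by blast
    have cs2: "(t - A * b - B * c)^2 \<le> B * R"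
      using wcs[OF fin(2), of w z] wnn2 unfolding zout R_def B_def by blast
    define y where "y = b - c"
    define s where "s = t - b"
    have P1: "A * y^2 \<le> P"
    proof -
      have "A * (A * y^2) \<le> A * P" using cs1 unfolding y_def by (simp add: power2_eq_square algebra_simps)
      then show ?thesis using Ap by simp
    qed
    have AB1: "A = 1 - B" using AB by simp
    have R1: "(s + B * y)^2 \<le> B * R"
    proof -
      have "t - A * b - B * c = s + B * y" unfolding s_def y_def AB1 by (simp add: algebra_simps)
      then show ?thesis using cs2 by simp
    qed
    have BQ: "A * s^2 \<le> B * Q"
    proof -
      have "B * Q = B * P + B * R" unfolding QPR by (simp add: algebra_simps)
      moreover have "B * (A * y^2) \<le> B * P" using P1 Bnn by (rule mult_left_mono)
      moreover have "B * (A * y^2) + (s + B * y)^2 = B * (y + s)^2 + A * s^2"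
        unfolding AB1 by (simp add: power2_eq_square algebra_simps)
      moreover have "B * (y + s)^2 \<ge> 0" using Bnn by simp
      ultimately show ?thesis using R1 by linarith
    qed
    have "A * s^2 * (1 - 2 * eps) \<le> eps * A * gamma N g w mu_hat"
    proof -
      have "A * s^2 * (1 - 2 * eps) \<le> B * Q * (1 - 2 * eps)" using BQ assms(3) by simp
      also have "\<dots> \<le> B * gamma N g w mu_hat * (1 - 2 * eps)" using Qg Bnn assms(3)
        by (intro mult_right_mono mult_left_mono) auto
      also have "\<dots> = (B * (1 - 2 * eps)) * gamma N g w mu_hat" by simp
      also have "\<dots> \<le> (eps * A) * gamma N g w mu_hat" using BA gnn by (rule mult_right_mono)
      finally show ?thesis by simp
    qed
    then have "A * (s^2 * (1 - 2 * eps)) \<le> A * (eps * gamma N g w mu_hat)"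
      by (simp add: algebra_simps)
    then have "s^2 * (1 - 2 * eps) \<le> eps * gamma N g w mu_hat" using Ap by simp
    then have s2: "s^2 \<le> (eps / (1 - 2 * eps)) * gamma N g w mu_hat" using assms(3)
      by (simp add: field_simps)
    have "s \<le> sqrt (s^2)" by (simp add: real_sqrt_abs)
    also have "\<dots> \<le> sqrt ((eps / (1 - 2 * eps)) * gamma N g w mu_hat)" using s2 by (rule real_sqrt_le_mono)
    also have "\<dots> = sqrt (eps / (1 - 2 * eps)) * sqrt (gamma N g w mu_hat)" by (rule real_sqrt_mult)
    finally have "t \<le> b + sqrt (eps / (1 - 2 * eps)) * sqrt (gamma N g w mu_hat)"
      unfolding s_def by simp
    then show ?thesis using dd bb unfolding t_def by simp
  qed
qed

end
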